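(* Let $\{S_w(x)\}_{w\in\mathfrak{S}_\infty}$ be a family of polynomials in $\mathbb{Q}[x_1,x_2,\ldots]$ indexed by permutations. Suppose that for every $w\in\mathfrak{S}_\infty$, $$\sum_{\substack{u,v\in\mathfrak{S}_\infty,\ w=uv\\ \ell(w)=\ell(u)+\ell(v)}}(-1)^{\ell(v)}S_{v^{-1}}(x)\,\mathfrak{S}_u(x)=\begin{cases}1,&w=\mathrm{id},\\0,&\text{otherwise}.\end{cases}$$ Then $S_w(x)=\mathfrak{S}_w(x)$ for all $w\in\mathfrak{S}_\infty$.
   Context: $\mathfrak{S}_\infty$ is the group of permutations of $\{1,2,\ldots\}$ fixing all but finitely many elements, and $\ell$ is the Coxeter length with respect to the simple transpositions $s_i=(i,i+1)$. For $\partial_i f=\frac{f(x)-f(s_ix)}{x_i-x_{i+1}}$ (where $s_i$ swaps $x_i,x_{i+1}$), the Schubert polynomials $\mathfrak{S}_w(x)$ are defined by $\mathfrak{S}_{w_0^n}(x)=x_1^{n-1}x_2^{n-2}\cdots x_{n-1}$ for the longest element $w_0^n\in\mathfrak{S}_n$, and $\partial_i\mathfrak{S}_w=\mathfrak{S}_{ws_i}$ if $\ell(ws_i)=\ell(w)-1$, $\partial_i\mathfrak{S}_w=0$ otherwise. *)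

theory Defs
  imports Complex_Main "HOL-Library.Poly_Mapping" "HOL-Combinatorics.Perm"
begin

text \<open>Polynomials in countably many variables x_0, x_1, ... over the rationals:
  a monomial is a finitely supported exponent vector nat =>0 nat, a polynomial a
  finitely supported map from monomials to coefficients.  (Variables and positions
  are indexed from 0 instead of 1; this is a harmless relabelling.)\<close>

type_synonym qpoly = "(nat \<Rightarrow>\<^sub>0 nat) \<Rightarrow>\<^sub>0 rat"

definition var :: "nat \<Rightarrow> qpoly" where
  "var i = Poly_Mapping.single (Poly_Mapping.single i 1) 1"

definition sref :: "nat \<Rightarrow> nat perm" where
  "sref i = Perm.swap i (Suc i)"

definition len :: "nat perm \<Rightarrow> nat" where
  "len w = card {(i, j). i < j \<and> Perm.apply w j < Perm.apply w i}"

definition swap_vars :: "nat \<Rightarrow> qpoly \<Rightarrow> qpoly" where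
  "swap_vars i f =
     Poly_Mapping.map_key (\<lambda>m. Poly_Mapping.map_key (Perm.apply (sref i)) m) f"

definition divdiff :: "nat \<Rightarrow> qpoly \<Rightarrow> qpoly" where
  "divdiff i f = (THE g. (var i - var (Suc i)) * g = f - swap_vars i f)"

definition w0 :: "nat \<Rightarrow> nat perm" where
  "w0 n = Perm (\<lambda>j. if j < n then n - 1 - j else j)"

definition staircase :: "nat \<Rightarrow> qpoly" where
  "staircase n = (\<Prod>i<n. var i ^ (n - 1 - i))"

definition is_schubert_family :: "(nat perm \<Rightarrow> qpoly) \<Rightarrow> bool" where
  "is_schubert_family S \<longleftrightarrow>
     (\<forall>n\<ge>1. S (w0 n) = staircase n) \<and>
     (\<forall>w i. divdiff i (S w) =
        (if len (w * sref i) + 1 = len w then S (w * sref i) else 0))"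

definition schubert :: "nat perm \<Rightarrow> qpoly" where
  "schubert = (THE S. is_schubert_family S)"

end

theory Submission
  imports Defs "HOL-Library.FuncSet"
begin

lemma poly_induct:
  fixes P :: "('a \<Rightarrow>\<^sub>0 'b::comm_monoid_add) \<Rightarrow> bool"
  assumes "\<And>f g. P f \<Longrightarrow> P g \<Longrightarrow> P (f + g)"
    and "\<And>m c. P (Poly_Mapping.single m c)"
  shows "P f"
proof (induct f rule: Poly_Mapping.update_induct)
  case const
  then show ?case using assms(2)[of undefined 0] by simp
next
  case (update f a b)
  have "Poly_Mapping.update a b f = f + Poly_Mapping.single a b"
    using update(1)
    by (intro poly_mapping_eqI) (auto simp: Poly_Mapping.lookup_update lookup_add lookup_single when_def in_keys_iff)
  then show ?case using assms update by simp
qed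

lemma additive_zero:
  fixes \<phi> :: "'a::comm_ring \<Rightarrow> 'b::comm_ring"
  assumes "\<And>f g. \<phi> (f + g) = \<phi> f + \<phi> g"
  shows "\<phi> 0 = 0"
  using assms[of 0 0] by simp

lemma mult_hom:
  fixes \<phi> :: "qpoly \<Rightarrow> qpoly"
  assumes add: "\<And>f g. \<phi> (f + g) = \<phi> f + \<phi> g"
    and sg: "\<And>a b c d. \<phi> (Poly_Mapping.single a c * Poly_Mapping.single b d) =
          \<phi> (Poly_Mapping.single a c) * \<phi> (Poly_Mapping.single b d)"
  shows "\<phi> (f * g) = \<phi> f * \<phi> g"
proof -
  have s1: "\<phi> (Poly_Mapping.single a c * g) = \<phi> (Poly_Mapping.single a c) * \<phi> g" for a c
    by (induct g rule: poly_induct) (simp_all add: distrib_left add sg)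
  show ?thesis
    by (induct f rule: poly_induct) (simp_all add: distrib_right add s1)
qed

lemma additive_eq:
  fixes \<phi> \<psi> :: "('a \<Rightarrow>\<^sub>0 'b::comm_monoid_add) \<Rightarrow> 'c::comm_monoid_add"
  assumes "\<And>f g. \<phi> (f + g) = \<phi> f + \<phi> g" "\<And>f g. \<psi> (f + g) = \<psi> f + \<psi> g"
    and "\<And>m c. \<phi> (Poly_Mapping.single m c) = \<psi> (Poly_Mapping.single m c)"
  shows "\<phi> f = \<psi> f"
  by (induct f rule: poly_induct) (simp_all add: assms)

lemma apply_sref: "Perm.apply (sref i) j = (if j = i then Suc i else if j = Suc i then i else j)"
  by (simp add: sref_def)

lemma sref_sref [simp]: "sref i * sref i = 1"
  by (rule perm_eqI) (simp add: apply_sequence[symmetric] apply_sref)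

lemma inverse_sref [simp]: "inverse (sref i) = sref i"
  by (metis perm.inverse_unique sref_sref)

lemma inj_sref: "inj (Perm.apply (sref i))"
  by (simp add: bij_is_inj)

lemma sref_invol [simp]: "Perm.apply (sref i) (Perm.apply (sref i) j) = j"
  by (simp add: apply_sref)

definition mk :: "nat \<Rightarrow> (nat \<Rightarrow>\<^sub>0 nat) \<Rightarrow> (nat \<Rightarrow>\<^sub>0 nat)" where
  "mk i m = Poly_Mapping.map_key (Perm.apply (sref i)) m"

lemma mk_fun: "mk i = Poly_Mapping.map_key (Perm.apply (sref i))"
  by (rule ext) (simp add: mk_def)

lemma swap_vars_alt: "swap_vars i f = Poly_Mapping.map_key (mk i) f"
  by (simp add: swap_vars_def mk_fun)

lemma mk_mk [simp]: "mk i (mk i m) = m"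
proof -
  have "mk i (mk i m) = Poly_Mapping.map_key (Perm.apply (sref i) \<circ> Perm.apply (sref i)) m"
    unfolding mk_def by (rule map_key_compose[OF inj_sref inj_sref])
  also have "Perm.apply (sref i) \<circ> Perm.apply (sref i) = (\<lambda>x. x)" by (simp add: fun_eq_iff)
  finally show ?thesis by (simp add: map_key_id)
qed

lemma mk_add: "mk i (a + b) = mk i a + mk i b"
  unfolding mk_def by (rule map_key_plus[OF inj_sref])

lemma mk_zero [simp]: "mk i 0 = 0"
  unfolding mk_def by (rule map_key_zero[OF inj_sref])

lemma inj_mk: "inj (mk i)"
  by (metis injI mk_mk)

lemma lookup_mk: "Poly_Mapping.lookup (mk i m) j = Poly_Mapping.lookup m (Perm.apply (sref i) j)"
  unfolding mk_def using inj_sref by (simp add: map_key.rep_eq)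

lemma mk_single: "mk i (Poly_Mapping.single j k) = Poly_Mapping.single (Perm.apply (sref i) j) k"
  by (rule poly_mapping_eqI) (auto simp: lookup_mk lookup_single when_def apply_sref)

lemma swap_vars_single: "swap_vars i (Poly_Mapping.single m c) = Poly_Mapping.single (mk i m) c"
proof -
  have "swap_vars i (Poly_Mapping.single m c) = Poly_Mapping.map_key (mk i) (Poly_Mapping.single (mk i (mk i m)) c)"
    by (simp only: swap_vars_alt mk_mk)
  also have "... = Poly_Mapping.single (mk i m) c"
    by (rule map_key_single[OF inj_mk])
  finally show ?thesis .
qed

lemma swap_vars_add [simp]: "swap_vars i (f + g) = swap_vars i f + swap_vars i g"
proof -
  have "swap_vars i (f + g) = Poly_Mapping.map_key (mk i) (f + g)"
    by (simp only: swap_vars_alt)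
  also have "... = Poly_Mapping.map_key (mk i) f + Poly_Mapping.map_key (mk i) g"
    by (rule map_key_plus[OF inj_mk])
  finally show ?thesis by (simp only: swap_vars_alt)
qed

lemma swap_vars_zero [simp]: "swap_vars i 0 = 0"
  using swap_vars_add[of i 0 0] by simp

lemma swap_vars_uminus [simp]: "swap_vars i (- f) = - swap_vars i f"
  using swap_vars_add[of i f "-f"] by (simp add: add_eq_0_iff2)

lemma swap_vars_diff [simp]: "swap_vars i (f - g) = swap_vars i f - swap_vars i g"
  using swap_vars_add[of i f "-g"] by simp

lemma swap_vars_mult [simp]: "swap_vars i (f * g) = swap_vars i f * swap_vars i g"
  by (rule mult_hom) (simp_all add: mult_single swap_vars_single mk_add)

lemma swap_vars_one [simp]: "swap_vars i 1 = 1"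
  using swap_vars_single[of i 0 1] by simp

lemma swap_vars_const: "swap_vars i (Poly_Mapping.single 0 c) = Poly_Mapping.single 0 c"
  by (simp add: swap_vars_single)

lemma swap_vars_swap_vars [simp]: "swap_vars i (swap_vars i f) = f"
  by (induct f rule: poly_induct) (simp_all add: swap_vars_single)

lemma swap_vars_var: "swap_vars i (var j) = var (Perm.apply (sref i) j)"
  by (simp add: var_def swap_vars_single mk_single)

lemma swap_vars_power [simp]: "swap_vars i (f ^ n) = swap_vars i f ^ n"
  by (induct n) simp_all

lemma swap_vars_sum: "swap_vars i (sum g A) = (\<Sum>a\<in>A. swap_vars i (g a))"
  by (induct A rule: infinite_finite_induct) simp_all

lemma swap_vars_prod: "swap_vars i (prod g A) = (\<Prod>a\<in>A. swap_vars i (g a))"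
  by (induct A rule: infinite_finite_induct) simp_all

lemma swap_vars_minus_one_pow [simp]: "swap_vars i ((-1) ^ n) = (-1) ^ n"
  by simp

definition dlt :: "nat \<Rightarrow> qpoly" where "dlt i = var i - var (Suc i)"

lemma var_power: "var j ^ k = Poly_Mapping.single (Poly_Mapping.single j k) 1"
proof (induct k)
  case 0 then show ?case by simp
next
  case (Suc k)
  have "var j ^ Suc k = var j ^ k * var j" by (simp add: mult.commute)
  also have "... = Poly_Mapping.single (Poly_Mapping.single j k + Poly_Mapping.single j 1) 1"
    by (subst Suc) (simp only: var_def mult_single mult_1)
  also have "Poly_Mapping.single j k + Poly_Mapping.single j 1 = Poly_Mapping.single j (Suc k)"
    by (simp add: single_add[symmetric])
  finally show ?case .
qed

lemma dlt_nz: "dlt i \<noteq> 0"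
proof
  assume "dlt i = 0"
  then have "Poly_Mapping.lookup (dlt i) (Poly_Mapping.single i 1) = 0" by simp
  moreover have "Poly_Mapping.single i (1::nat) \<noteq> Poly_Mapping.single (Suc i) 1"
    by (metis lookup_single_eq lookup_single_not_eq n_not_Suc_n zero_neq_one)
  ultimately show False
    by (simp add: dlt_def var_def lookup_minus lookup_single when_def)
qed

definition DD :: "nat \<Rightarrow> qpoly \<Rightarrow> bool" where
  "DD i f \<longleftrightarrow> (\<exists>g. dlt i * g = f - swap_vars i f)"

lemma DD_add: "DD i f \<Longrightarrow> DD i g \<Longrightarrow> DD i (f + g)"
  unfolding DD_def by (metis (no_types, lifting) add_diff_add distrib_left swap_vars_add)

lemma DD_mult: "DD i f \<Longrightarrow> DD i g \<Longrightarrow> DD i (f * g)"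
proof -
  assume "DD i f" "DD i g"
  then obtain a b where a: "dlt i * a = f - swap_vars i f" and b: "dlt i * b = g - swap_vars i g"
    unfolding DD_def by blast
  have "f * g - swap_vars i (f * g) = (f - swap_vars i f) * g + swap_vars i f * (g - swap_vars i g)"
    by (simp add: algebra_simps)
  also have "... = dlt i * (a * g + swap_vars i f * b)"
    by (simp add: a[symmetric] b[symmetric] algebra_simps)
  finally show ?thesis unfolding DD_def by metis
qed

lemma DD_var: "DD i (var j)"
proof -
  consider "j = i" | "j = Suc i" | "j \<noteq> i" "j \<noteq> Suc i" by blast
  then show ?thesis
  proof cases
    case 1 then show ?thesis unfolding DD_def
      by (intro exI[of _ 1]) (simp add: swap_vars_var apply_sref dlt_def)
  next
    case 2 then show ?thesis unfolding DD_def
      by (intro exI[of _ "-1"]) (simp add: swap_vars_var apply_sref dlt_def)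
  next
    case 3 then show ?thesis unfolding DD_def
      by (intro exI[of _ 0]) (simp add: swap_vars_var apply_sref dlt_def)
  qed
qed

lemma DD_const: "DD i (Poly_Mapping.single 0 c)"
  unfolding DD_def by (intro exI[of _ 0]) (simp add: swap_vars_const)

lemma DD_mono: "DD i (Poly_Mapping.single m 1)"
proof (induct m rule: poly_induct)
  case (1 f g)
  then show ?case using DD_mult[OF 1] by (simp add: mult_single)
next
  case (2 m c)
  have "DD i (var m ^ c)" by (induct c) (simp_all add: DD_mult DD_var DD_const[of i 1, simplified])
  then show ?case by (simp add: var_power)
qed

lemma DD_all: "DD i f"
proof (induct f rule: poly_induct)
  case (1 f g) then show ?case by (rule DD_add)
next
  case (2 m c)
  have "Poly_Mapping.single m c = Poly_Mapping.single 0 c * Poly_Mapping.single m 1"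
    by (simp add: mult_single)
  then show ?case using DD_mult[OF DD_const DD_mono] by simp
qed

lemma divdiff_char: "dlt i * divdiff i f = f - swap_vars i f"
proof -
  obtain g where g: "dlt i * g = f - swap_vars i f" using DD_all[of i f] unfolding DD_def by blast
  have "(var i - var (Suc i)) * divdiff i f = f - swap_vars i f"
    unfolding divdiff_def
  proof (rule theI[where a = g])
    show "(var i - var (Suc i)) * g = f - swap_vars i f" using g by (simp add: dlt_def)
  next
    fix h assume "(var i - var (Suc i)) * h = f - swap_vars i f"
    then have "dlt i * h = dlt i * g" using g by (simp add: dlt_def)
    then show "h = g" using dlt_nz by simp
  qed
  then show ?thesis by (simp add: dlt_def)
qed

lemma divdiff_unique: "dlt i * g = f - swap_vars i f \<Longrightarrow> divdiff i f = g"
  using divdiff_char[of i f] dlt_nz[of i] by (metis mult_left_cancel)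

lemma dd_add [simp]: "divdiff i (f + g) = divdiff i f + divdiff i g"
  by (rule divdiff_unique) (simp add: divdiff_char distrib_left)

lemma dd_zero [simp]: "divdiff i 0 = 0"
  by (rule divdiff_unique) simp

lemma dd_uminus [simp]: "divdiff i (- f) = - divdiff i f"
  by (rule divdiff_unique) (simp add: divdiff_char)

lemma dd_diff [simp]: "divdiff i (f - g) = divdiff i f - divdiff i g"
  by (rule divdiff_unique) (simp add: divdiff_char algebra_simps)

lemma dd_sum: "divdiff i (sum g A) = (\<Sum>a\<in>A. divdiff i (g a))"
  by (induct A rule: infinite_finite_induct) simp_all

lemma dd_eq0_iff: "divdiff i f = 0 \<longleftrightarrow> swap_vars i f = f"
  using divdiff_char[of i f] dlt_nz[of i] by (metis mult_zero_right no_zero_divisors right_minus_eq)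

lemma swap_dlt_self [simp]: "swap_vars i (dlt i) = - dlt i"
  by (simp add: dlt_def swap_vars_var apply_sref)

lemma swap_dd [simp]: "swap_vars i (divdiff i f) = divdiff i f"
proof -
  have "swap_vars i (dlt i * divdiff i f) = swap_vars i f - f"
    by (simp add: divdiff_char)
  then have "- (dlt i * swap_vars i (divdiff i f)) = swap_vars i f - f"
    by simp
  then have "dlt i * swap_vars i (divdiff i f) = dlt i * divdiff i f"
    by (simp add: divdiff_char minus_equation_iff[of "dlt i * _"])
  then show ?thesis using dlt_nz by simp
qed

lemma dd_dd [simp]: "divdiff i (divdiff i f) = 0"
  by (simp add: dd_eq0_iff)

lemma dd_mult_sym: "swap_vars i a = a \<Longrightarrow> divdiff i (a * f) = a * divdiff i f"
  by (rule divdiff_unique) (simp add: divdiff_char algebra_simps)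

lemma dd_mult: "divdiff i (f * g) = divdiff i f * g + f * divdiff i g - dlt i * divdiff i f * divdiff i g"
proof (rule divdiff_unique)
  have sf: "swap_vars i f = f - dlt i * divdiff i f" and sg: "swap_vars i g = g - dlt i * divdiff i g"
    by (simp_all add: divdiff_char)
  show "dlt i * (divdiff i f * g + f * divdiff i g - dlt i * divdiff i f * divdiff i g) =
    f * g - swap_vars i (f * g)"
    by (simp only: swap_vars_mult sf sg) (simp add: algebra_simps)
qed

lemma dd_var_self: "divdiff i (var i) = 1"
  by (rule divdiff_unique) (simp add: swap_vars_var apply_sref dlt_def)

lemma mk_comm: "i + 1 < j \<or> j + 1 < i \<Longrightarrow> mk i (mk j m) = mk j (mk i m)"
  by (rule poly_mapping_eqI) (auto simp: lookup_mk apply_sref)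

lemma swap_comm: assumes "i + 1 < j \<or> j + 1 < i" shows "swap_vars i (swap_vars j f) = swap_vars j (swap_vars i f)"
  by (induct f rule: poly_induct) (simp_all add: swap_vars_single mk_comm[OF assms])

lemma mk_braid: "mk i (mk (Suc i) (mk i m)) = mk (Suc i) (mk i (mk (Suc i) m))"
  by (rule poly_mapping_eqI) (auto simp: lookup_mk apply_sref)

lemma swap_braid: "swap_vars i (swap_vars (Suc i) (swap_vars i f)) = swap_vars (Suc i) (swap_vars i (swap_vars (Suc i) f))"
  by (induct f rule: poly_induct) (simp_all add: swap_vars_single mk_braid)

lemma dd_comm:
  assumes "i + 1 < j \<or> j + 1 < i"
  shows "divdiff i (divdiff j f) = divdiff j (divdiff i f)"
proof -
  have sd: "swap_vars i (dlt j) = dlt j" "swap_vars j (dlt i) = dlt i"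
    using assms by (auto simp: dlt_def swap_vars_var apply_sref)
  have key: "dlt i * dlt j * divdiff i (divdiff j f) =
      f - swap_vars j f - swap_vars i f + swap_vars i (swap_vars j f)"
    if sd: "swap_vars i (dlt j) = dlt j" for i j
  proof -
    have "dlt i * dlt j * divdiff i (divdiff j f) = dlt j * (dlt i * divdiff i (divdiff j f))"
      by (simp add: ac_simps)
    also have "... = dlt j * (divdiff j f - swap_vars i (divdiff j f))"
      by (simp only: divdiff_char)
    also have "... = dlt j * divdiff j f - swap_vars i (dlt j * divdiff j f)"
      by (simp add: sd algebra_simps)
    also have "... = f - swap_vars j f - swap_vars i f + swap_vars i (swap_vars j f)"
      by (simp add: divdiff_char)
    finally show ?thesis .
  qed
  have R: "f - swap_vars j f - swap_vars i f + swap_vars i (swap_vars j f) =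
     f - swap_vars i f - swap_vars j f + swap_vars j (swap_vars i f)"
    by (simp add: swap_comm[OF assms])
  have "dlt i * dlt j * divdiff i (divdiff j f) = dlt j * dlt i * divdiff j (divdiff i f)"
    using key[of i j, OF sd(1)] key[of j i, OF sd(2)] R by simp
  then have "dlt i * dlt j * divdiff i (divdiff j f) = dlt i * dlt j * divdiff j (divdiff i f)"
    by (simp add: mult.commute)
  then show ?thesis using dlt_nz by simp
qed

lemma braid_side:
  assumes e1: "swap_vars p (dlt q) = e" and e2: "swap_vars q (dlt p) = e" and e3: "e - dlt q = dlt p"
  shows "dlt p * dlt q * e * divdiff p (divdiff q (divdiff p f)) =
    f - swap_vars p f - swap_vars q f + swap_vars q (swap_vars p f) + swap_vars p (swap_vars q f)
     - swap_vars p (swap_vars q (swap_vars p f))"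
proof -
  define a where "a = divdiff p f"
  define b where "b = divdiff q a"
  have sa: "swap_vars p a = a" by (simp add: a_def)
  have se: "swap_vars p e = dlt q" using e1 by (metis swap_vars_swap_vars)
  have da: "dlt p * a = f - swap_vars p f" by (simp add: a_def divdiff_char)
  have db: "dlt q * b = a - swap_vars q a" by (simp add: b_def divdiff_char)
  have "dlt p * dlt q * e * divdiff p b = dlt q * e * (dlt p * divdiff p b)"
    by (simp add: ac_simps)
  also have "... = dlt q * e * (b - swap_vars p b)"
    by (simp only: divdiff_char)
  also have "... = e * (dlt q * b) - dlt q * (e * swap_vars p b)"
    by (simp add: algebra_simps)
  also have "e * swap_vars p b = swap_vars p (dlt q * b)"
    by (simp add: e1)
  also have "... = a - swap_vars p (swap_vars q a)"
    by (simp add: db sa)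
  also have "e * (dlt q * b) - dlt q * (a - swap_vars p (swap_vars q a)) =
     (e - dlt q) * a - e * swap_vars q a + dlt q * swap_vars p (swap_vars q a)"
    by (simp only: db) (simp add: algebra_simps)
  also have "... = dlt p * a - swap_vars q (dlt p * a) + swap_vars p (swap_vars q (dlt p * a))"
    by (simp add: e3 e2 se)
  also have "... = f - swap_vars p f - swap_vars q f + swap_vars q (swap_vars p f) + swap_vars p (swap_vars q f)
     - swap_vars p (swap_vars q (swap_vars p f))"
    by (simp only: da) (simp add: algebra_simps)
  finally show ?thesis by (simp add: b_def a_def)
qed
lemma dd_braid: "divdiff i (divdiff (Suc i) (divdiff i f)) = divdiff (Suc i) (divdiff i (divdiff (Suc i) f))"
proof -
  define e where "e = var i - var (Suc (Suc i))"
  have 1: "dlt i * dlt (Suc i) * e * divdiff i (divdiff (Suc i) (divdiff i f)) =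
    f - swap_vars i f - swap_vars (Suc i) f + swap_vars (Suc i) (swap_vars i f) + swap_vars i (swap_vars (Suc i) f)
     - swap_vars i (swap_vars (Suc i) (swap_vars i f))"
    by (rule braid_side) (simp_all add: e_def dlt_def swap_vars_var apply_sref)
  have 2: "dlt (Suc i) * dlt i * e * divdiff (Suc i) (divdiff i (divdiff (Suc i) f)) =
    f - swap_vars (Suc i) f - swap_vars i f + swap_vars i (swap_vars (Suc i) f) + swap_vars (Suc i) (swap_vars i f)
     - swap_vars (Suc i) (swap_vars i (swap_vars (Suc i) f))"
    by (rule braid_side) (simp_all add: e_def dlt_def swap_vars_var apply_sref)
  have "e \<noteq> 0"
  proof
    assume "e = 0"
    then have "Poly_Mapping.lookup e (Poly_Mapping.single i 1) = 0" by simp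
    moreover have "Poly_Mapping.single i (1::nat) \<noteq> Poly_Mapping.single (Suc (Suc i)) 1"
    proof
      assume "Poly_Mapping.single i (1::nat) = Poly_Mapping.single (Suc (Suc i)) 1"
      then have "Poly_Mapping.lookup (Poly_Mapping.single i (1::nat)) i = Poly_Mapping.lookup (Poly_Mapping.single (Suc (Suc i)) 1) i"
        by simp
      then show False by (simp add: lookup_single)
    qed
    ultimately show False
      by (simp add: e_def var_def lookup_minus lookup_single when_def)
  qed
  have R: "f - swap_vars i f - swap_vars (Suc i) f + swap_vars (Suc i) (swap_vars i f) + swap_vars i (swap_vars (Suc i) f)
     - swap_vars i (swap_vars (Suc i) (swap_vars i f)) =
    f - swap_vars (Suc i) f - swap_vars i f + swap_vars i (swap_vars (Suc i) f) + swap_vars (Suc i) (swap_vars i f)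
     - swap_vars (Suc i) (swap_vars i (swap_vars (Suc i) f))"
    by (simp only: swap_braid) (simp add: algebra_simps)
  have 3: "dlt (Suc i) * dlt i * e = dlt i * dlt (Suc i) * e" by (simp add: mult.commute)
  have "dlt i * dlt (Suc i) * e * divdiff i (divdiff (Suc i) (divdiff i f)) =
        dlt i * dlt (Suc i) * e * divdiff (Suc i) (divdiff i (divdiff (Suc i) f))"
    using 1 2 R unfolding 3 by simp
  then show ?thesis using dlt_nz \<open>e \<noteq> 0\<close> by simp
qed

definition inS :: "nat \<Rightarrow> nat perm \<Rightarrow> bool" where
  "inS n w \<longleftrightarrow> (\<forall>j\<ge>n. Perm.apply w j = j)"

definition invs :: "nat perm \<Rightarrow> (nat \<times> nat) set" where
  "invs w = {(i, j). i < j \<and> Perm.apply w j < Perm.apply w i}"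

lemma len_invs: "len w = card (invs w)"
  by (simp add: len_def invs_def)

lemma ex_inS: "\<exists>n. inS n w"
proof -
  obtain n where "\<forall>j\<in>affected w. j < n"
    using finite_affected[of w] finite_nat_set_iff_bounded by blast
  then have "inS n w" unfolding inS_def using in_affected by (metis not_le)
  then show ?thesis ..
qed

lemma inS_mono: "inS n w \<Longrightarrow> n \<le> m \<Longrightarrow> inS m w"
  by (simp add: inS_def)

lemma inS_less: assumes "inS n w" "j < n" shows "Perm.apply w j < n"
proof (rule ccontr)
  assume "\<not> Perm.apply w j < n"
  then have "Perm.apply w (Perm.apply w j) = Perm.apply w j" using assms(1) by (simp add: inS_def)
  then have "Perm.apply w j = j" by (simp add: apply_inj)
  then show False using assms \<open>\<not> Perm.apply w j < n\<close> by simp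
qed

lemma inS_times: "inS n u \<Longrightarrow> inS n v \<Longrightarrow> inS n (u * v)"
  by (simp add: inS_def apply_times)

lemma apply_inverse_apply [simp]: "Perm.apply (inverse w) (Perm.apply w x) = x"
  by (simp add: apply_sequence)

lemma apply_apply_inverse [simp]: "Perm.apply w (Perm.apply (inverse w) x) = x"
  by (simp add: apply_sequence)

lemma inS_inverse: "inS n u \<Longrightarrow> inS n (inverse u)"
  unfolding inS_def by (metis apply_inverse_apply)

lemma inS_one [simp]: "inS n 1"
  by (simp add: inS_def)

lemma inS_sref: "Suc i < n \<Longrightarrow> inS n (sref i)"
  by (simp add: inS_def apply_sref)

lemma invs_sub: "inS n w \<Longrightarrow> invs w \<subseteq> {..<n} \<times> {..<n}"
proof
  fix p assume w: "inS n w" and p: "p \<in> invs w"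
  obtain a b where ab: "p = (a, b)" "a < b" "Perm.apply w b < Perm.apply w a"
    using p unfolding invs_def by blast
  have "a < n"
  proof (rule ccontr)
    assume "\<not> a < n"
    then have "Perm.apply w a = a" "Perm.apply w b = b" using w ab by (auto simp: inS_def)
    then show False using ab by simp
  qed
  have "b < n"
  proof (rule ccontr)
    assume "\<not> b < n"
    then have "Perm.apply w b = b" using w by (auto simp: inS_def)
    then show False using ab inS_less[OF w \<open>a < n\<close>] \<open>\<not> b < n\<close> by simp
  qed
  show "p \<in> {..<n} \<times> {..<n}" using ab \<open>a < n\<close> \<open>b < n\<close> by simp
qed

lemma finite_invs: "finite (invs w)"
  using ex_inS[of w] invs_sub by (meson finite_SigmaI finite_lessThan finite_subset)

lemma len_le: "inS n w \<Longrightarrow> len w \<le> n * n"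
  unfolding len_invs using invs_sub[of n w] card_mono[of "{..<n} \<times> {..<n}" "invs w"]
  by (simp add: card_cartesian_product)

lemma len_ascent:
  assumes asc: "Perm.apply w i < Perm.apply w (Suc i)"
  shows "len (w * sref i) = Suc (len w)"
proof -
  let ?t = "Perm.apply (sref i)"
  let ?phi = "\<lambda>(a, b). (?t a, ?t b)"
  have tmono: "?t a < ?t b" if "a < b" "(a, b) \<noteq> (i, Suc i)" for a b
    using that by (auto simp: apply_sref)
  have eq: "invs (w * sref i) = insert (i, Suc i) (?phi ` invs w)"
  proof (intro equalityI subsetI)
    fix p assume p: "p \<in> invs (w * sref i)"
    obtain a b where ab: "p = (a, b)" "a < b" "Perm.apply w (?t b) < Perm.apply w (?t a)"
      using p unfolding invs_def by (auto simp: apply_times)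
    show "p \<in> insert (i, Suc i) (?phi ` invs w)"
    proof (cases "(a, b) = (i, Suc i)")
      case True then show ?thesis using ab by simp
    next
      case False
      have "(?t a, ?t b) \<in> invs w" using tmono[OF ab(2) False] ab(3) by (simp add: invs_def)
      moreover have "p = ?phi (?t a, ?t b)" using ab by simp
      ultimately show ?thesis by blast
    qed
  next
    fix p assume p: "p \<in> insert (i, Suc i) (?phi ` invs w)"
    show "p \<in> invs (w * sref i)"
    proof (cases "p = (i, Suc i)")
      case True then show ?thesis using asc by (simp add: invs_def apply_times apply_sref)
    next
      case False
      then obtain a b where ab: "(a, b) \<in> invs w" "p = (?t a, ?t b)" using p by auto
      have "a < b" "Perm.apply w b < Perm.apply w a" using ab by (auto simp: invs_def)
      moreover have "(a, b) \<noteq> (i, Suc i)" using asc \<open>Perm.apply w b < Perm.apply w a\<close> by auto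
      ultimately show ?thesis using ab tmono by (simp add: invs_def apply_times)
    qed
  qed
  have inj: "inj_on ?phi (invs w)"
    by (rule inj_onI) (auto simp: apply_inj)
  have nin: "(i, Suc i) \<notin> ?phi ` invs w"
  proof
    assume "(i, Suc i) \<in> ?phi ` invs w"
    then obtain a b where "(a, b) \<in> invs w" "?t a = i" "?t b = Suc i" by auto
    then have "a = Suc i" "b = i" by (metis sref_invol apply_sref)+
    then show False using \<open>(a, b) \<in> invs w\<close> by (simp add: invs_def)
  qed
  show ?thesis unfolding len_invs eq
    using finite_invs[of w] inj nin by (simp add: card_image)
qed

lemma len_descent:
  assumes "Perm.apply w (Suc i) < Perm.apply w i"
  shows "len w = Suc (len (w * sref i))"
proof -
  have "Perm.apply (w * sref i) i < Perm.apply (w * sref i) (Suc i)"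
    using assms by (simp add: apply_times apply_sref)
  from len_ascent[OF this] show ?thesis by (simp add: mult.assoc)
qed

lemma len_sref_cases:
  "(Perm.apply w i < Perm.apply w (Suc i) \<and> len (w * sref i) = Suc (len w)) \<or>
   (Perm.apply w (Suc i) < Perm.apply w i \<and> len w = Suc (len (w * sref i)))"
proof -
  have "Perm.apply w i \<noteq> Perm.apply w (Suc i)" by (simp add: apply_inj)
  then show ?thesis using len_ascent len_descent by (meson linorder_neqE_nat)
qed

lemma no_descent_one:
  assumes "\<forall>i. \<not> Perm.apply w (Suc i) < Perm.apply w i"
  shows "w = 1"
proof -
  have "Perm.apply w i < Perm.apply w (Suc i)" for i
    using assms apply_inj[of w i "Suc i"] by (metis linorder_neqE_nat n_not_Suc_n)
  then have sm: "strict_mono (Perm.apply w)" by (simp add: strict_mono_Suc_iff)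
  have "Perm.apply w j = j" for j
  proof (induct j rule: less_induct)
    case (less j)
    obtain x where x: "Perm.apply w x = j" by (metis apply_apply_inverse)
    have "\<not> x < j"
    proof
      assume "x < j" then have "Perm.apply w x = x" using less by simp
      then show False using x \<open>x < j\<close> by simp
    qed
    then have "Perm.apply w j \<le> Perm.apply w x" using sm by (simp add: strict_mono_less_eq)
    then show ?case using strict_mono_imp_increasing[OF sm, of j] x by simp
  qed
  then show ?thesis by (intro perm_eqI) simp
qed

lemma exists_descent: "w \<noteq> 1 \<Longrightarrow> \<exists>i. Perm.apply w (Suc i) < Perm.apply w i"
  using no_descent_one by blast

lemma len_one [simp]: "len 1 = 0"
proof -
  have "invs 1 = {}" by (auto simp: invs_def)
  then show ?thesis unfolding len_invs by simp
qed

lemma len_eq0_iff: "len w = 0 \<longleftrightarrow> w = 1"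
proof
  assume "len w = 0"
  show "w = 1"
  proof (rule ccontr)
    assume "w \<noteq> 1"
    then obtain i where "Perm.apply w (Suc i) < Perm.apply w i" using exists_descent by blast
    then show False using len_descent \<open>len w = 0\<close> by simp
  qed
qed simp

lemma len_sref_le: "len (w * sref i) \<le> Suc (len w)"
  using len_sref_cases[of w i] by auto

lemma len_sref_ge: "len w \<le> Suc (len (w * sref i))"
  using len_sref_cases[of w i] by auto

lemma len_subadd: "len (x * y) \<le> len x + len y"
proof (induct "len y" arbitrary: y)
  case 0 then show ?case by (metis len_eq0_iff mult_1_right order.refl add_0_right)
next
  case (Suc k)
  then have "y \<noteq> 1" by auto
  then obtain i where d: "Perm.apply y (Suc i) < Perm.apply y i" using exists_descent by blast
  have ly: "len y = Suc (len (y * sref i))" using len_descent[OF d] .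
  have "x * y = (x * (y * sref i)) * sref i" by (simp add: mult.assoc)
  then have "len (x * y) \<le> Suc (len (x * (y * sref i)))" using len_sref_le by metis
  also have "len (x * (y * sref i)) \<le> len x + len (y * sref i)" using Suc ly by simp
  finally show ?case using ly by simp
qed

lemma len_inverse: "len (inverse w) = len w"
proof -
  have "invs (inverse w) = (\<lambda>(a, b). (Perm.apply w b, Perm.apply w a)) ` invs w"
  proof (intro equalityI subsetI)
    fix p assume "p \<in> invs (inverse w)"
    then obtain a b where ab: "p = (a, b)" "a < b" "Perm.apply (inverse w) b < Perm.apply (inverse w) a"
      unfolding invs_def by blast
    let ?a = "Perm.apply (inverse w) b" and ?b = "Perm.apply (inverse w) a"
    have "(?a, ?b) \<in> invs w" using ab by (simp add: invs_def)
    moreover have "p = (Perm.apply w ?b, Perm.apply w ?a)" using ab by simp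
    ultimately show "p \<in> (\<lambda>(a, b). (Perm.apply w b, Perm.apply w a)) ` invs w" by force
  next
    fix p assume "p \<in> (\<lambda>(a, b). (Perm.apply w b, Perm.apply w a)) ` invs w"
    then obtain a b where "(a, b) \<in> invs w" "p = (Perm.apply w b, Perm.apply w a)" by auto
    then show "p \<in> invs (inverse w)" by (simp add: invs_def)
  qed
  moreover have "inj_on (\<lambda>(a, b). (Perm.apply w b, Perm.apply w a)) (invs w)"
    by (rule inj_onI) (auto simp: apply_inj)
  ultimately show ?thesis unfolding len_invs by (simp add: card_image)
qed

lemma descent_bound:
  assumes "inS n w" "Perm.apply w (Suc i) < Perm.apply w i"
  shows "Suc i < n"
proof (rule ccontr)
  assume "\<not> Suc i < n"
  then have 1: "Perm.apply w (Suc i) = Suc i" using assms(1) by (simp add: inS_def)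
  show False
  proof (cases "i < n")
    case True
    then have "Perm.apply w i < n" using inS_less assms(1) by blast
    then show False using 1 assms(2) \<open>\<not> Suc i < n\<close> by simp
  next
    case False
    then show False using 1 assms by (simp add: inS_def)
  qed
qed

definition red :: "nat perm \<Rightarrow> (nat perm \<times> nat perm) set" where
  "red w = {(u, v). w = u * v \<and> len w = len u + len v}"

lemma red_inS:
  assumes "inS n w" "(u, v) \<in> red w"
  shows "inS n u \<and> inS n v"
  using assms
proof (induct "len v" arbitrary: w u v)
  case 0
  then have "v = 1" using len_eq0_iff by metis
  then show ?case using 0 by (simp add: red_def)
next
  case (Suc k)
  then have "v \<noteq> 1" by auto
  then obtain i where d: "Perm.apply v (Suc i) < Perm.apply v i" using exists_descent by blast
  have lv: "len v = Suc (len (v * sref i))" using len_descent[OF d] .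
  have w: "w = u * v" "len w = len u + len v" using Suc(4) unfolding red_def by blast+
  have ws: "w * sref i = u * (v * sref i)" using w by (simp add: mult.assoc)
  have "len (w * sref i) \<le> len u + len (v * sref i)" using ws len_subadd by metis
  then have lt: "len (w * sref i) < len w" using w lv by simp
  have dw: "Perm.apply w (Suc i) < Perm.apply w i"
    using len_sref_cases[of w i] lt by linarith
  have ni: "Suc i < n" using descent_bound[OF Suc(3) dw] .
  have "len (w * sref i) = len u + len (v * sref i)"
    using len_sref_ge[of w i] lt w lv \<open>len (w * sref i) \<le> _\<close> by simp
  then have "(u, v * sref i) \<in> red (w * sref i)" using ws by (simp add: red_def)
  moreover have "inS n (w * sref i)" using inS_times[OF Suc(3) inS_sref[OF ni]] .
  moreover have "k = len (v * sref i)" using Suc(2) lv by simp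
  ultimately have "inS n u \<and> inS n (v * sref i)" using Suc(1) by blast
  moreover have "v = (v * sref i) * sref i" by (simp add: mult.assoc)
  ultimately show ?case using inS_times inS_sref[OF ni] by metis
qed

lemma finite_inS: "finite {u. inS n u}"
proof -
  let ?r = "\<lambda>u. restrict (Perm.apply u) {..<n}"
  have "inj_on ?r {u. inS n u}"
  proof (rule inj_onI)
    fix u v assume u: "u \<in> {u. inS n u}" and v: "v \<in> {u. inS n u}" and e: "?r u = ?r v"
    show "u = v"
    proof (rule perm_eqI)
      fix a show "Perm.apply u a = Perm.apply v a"
      proof (cases "a < n")
        case True then show ?thesis using fun_cong[OF e, of a] by simp
      next
        case False then show ?thesis using u v by (simp add: inS_def)
      qed
    qed
  qed
  moreover have "?r ` {u. inS n u} \<subseteq> PiE {..<n} (\<lambda>_. {..<n})"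
  proof
    fix f assume "f \<in> ?r ` {u. inS n u}"
    then obtain u where "inS n u" "f = ?r u" by auto
    then show "f \<in> PiE {..<n} (\<lambda>_. {..<n})" by (auto simp: PiE_iff inS_less)
  qed
  moreover have "finite (PiE {..<n} (\<lambda>_. {..<n::nat}))" by (simp add: finite_PiE)
  ultimately show ?thesis by (meson finite_imageD finite_subset)
qed

lemma finite_red: "finite (red w)"
proof -
  obtain n where n: "inS n w" using ex_inS by blast
  have "red w \<subseteq> {u. inS n u} \<times> {u. inS n u}" using red_inS[OF n] by auto
  then show ?thesis using finite_inS by (meson finite_SigmaI finite_subset)
qed

lemma apply_w0: "Perm.apply (w0 n) j = (if j < n then n - 1 - j else j)"
proof -
  let ?f = "\<lambda>j::nat. if j < n then n - 1 - j else j"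
  have "?f \<circ> ?f = id" by (auto simp: fun_eq_iff)
  then have "bij ?f" using o_bij by blast
  moreover have "finite {j. ?f j \<noteq> j}" by (rule finite_subset[of _ "{..<n}"]) auto
  ultimately show ?thesis unfolding w0_def by (simp add: Perm_inverse)
qed

lemma inS_w0: "inS n (w0 n)"
  by (simp add: inS_def apply_w0)

lemma not_w0_ascent:
  assumes "inS n w" "w \<noteq> w0 n"
  shows "\<exists>i. Suc i < n \<and> Perm.apply w i < Perm.apply w (Suc i)"
proof (rule ccontr)
  assume "\<not> ?thesis"
  then have dec: "Perm.apply w (Suc i) < Perm.apply w i" if "Suc i < n" for i
    using that apply_inj[of w i "Suc i"] by (metis linorder_neqE_nat n_not_Suc_n)
  have up: "Perm.apply w j \<le> n - 1 - j" if "j < n" for j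
    using that
  proof (induct j)
    case 0 then show ?case using inS_less[OF assms(1)] by fastforce
  next
    case (Suc j) then show ?case using dec[of j] by simp
  qed
  have down: "n - 1 - j \<le> Perm.apply w j" if "j < n" for j
    using that
  proof (induct "n - 1 - j" arbitrary: j)
    case 0 then show ?case by simp
  next
    case (Suc k)
    then have "Suc j < n" by simp
    then have "n - 1 - Suc j \<le> Perm.apply w (Suc j)" using Suc by simp
    then show ?case using dec[OF \<open>Suc j < n\<close>] by simp
  qed
  have "w = w0 n"
  proof (rule perm_eqI)
    fix j show "Perm.apply w j = Perm.apply (w0 n) j"
      using up[of j] down[of j] assms(1) by (auto simp: apply_w0 inS_def)
  qed
  then show False using assms(2) by simp
qed

lemma apply_wsref: "Perm.apply (w * sref i) k = Perm.apply w (if k = i then Suc i else if k = Suc i then i else k)"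
  by (simp add: apply_times apply_sref)

lemma ascent_step:
  assumes "inS n w" "Suc i < n" "Perm.apply w i < Perm.apply w (Suc i)"
  shows "inS n (w * sref i)" "len (w * sref i) = Suc (len w)" "n * n - len (w * sref i) < n * n - len w"
proof -
  show 1: "inS n (w * sref i)" using inS_times[OF assms(1) inS_sref[OF assms(2)]] .
  show 2: "len (w * sref i) = Suc (len w)" using len_ascent[OF assms(3)] .
  show "n * n - len (w * sref i) < n * n - len w" using len_le[OF 1] 2 by simp
qed

definition asc :: "nat \<Rightarrow> nat perm \<Rightarrow> nat" where
  "asc n w = (LEAST i. Suc i < n \<and> Perm.apply w i < Perm.apply w (Suc i))"

lemma asc_prop:
  assumes "inS n w" "w \<noteq> w0 n"
  shows "Suc (asc n w) < n \<and> Perm.apply w (asc n w) < Perm.apply w (Suc (asc n w))"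
  unfolding asc_def by (rule LeastI_ex) (rule not_w0_ascent[OF assms])

lemma asc_least:
  "Suc i < n \<Longrightarrow> Perm.apply w i < Perm.apply w (Suc i) \<Longrightarrow> asc n w \<le> i"
  unfolding asc_def by (rule Least_le) simp

function F :: "nat \<Rightarrow> nat perm \<Rightarrow> qpoly" where
  "F n w = (if inS n w \<and> w \<noteq> w0 n then divdiff (asc n w) (F n (w * sref (asc n w))) else staircase n)"
  by pat_completeness auto
termination
proof (relation "measure (\<lambda>(n, w). n * n - len w)")
  fix n w
  assume a: "inS n w \<and> w \<noteq> w0 n"
  show "((n, w * sref (asc n w)), n, w) \<in> measure (\<lambda>(n, w). n * n - len w)"
    using ascent_step(3)[OF conjunct1[OF a]] asc_prop[of n w] a by simp
qed simp

declare F.simps [simp del]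

lemma w0_no_ascent: "Suc i < n \<Longrightarrow> \<not> Perm.apply (w0 n) i < Perm.apply (w0 n) (Suc i)"
  by (simp add: apply_w0)

lemma F_w0: "F n (w0 n) = staircase n"
  by (simp add: F.simps)

lemma sref_comm: "Suc i < j \<or> Suc j < i \<Longrightarrow> sref i * sref j = sref j * sref i"
  by (rule perm_eqI) (auto simp: apply_times apply_sref)

lemma sref_braid: "sref i * sref (Suc i) * sref i = sref (Suc i) * sref i * sref (Suc i)"
  by (rule perm_eqI) (auto simp: apply_times apply_sref)

lemma F_asc:
  assumes "inS n w" "Suc i < n" "Perm.apply w i < Perm.apply w (Suc i)"
  shows "F n w = divdiff i (F n (w * sref i))"
  using assms
proof (induct "n * n - len w" arbitrary: w i rule: less_induct)
  case less
  have IH: "F n x = divdiff k (F n (x * sref k))"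
    if "inS n x" "Suc k < n" "Perm.apply x k < Perm.apply x (Suc k)" "n * n - len x < n * n - len w" for x k
    using less(1) that by blast
  have nw0: "w \<noteq> w0 n" using less(3,4) w0_no_ascent by blast
  define j where "j = asc n w"
  have j: "Suc j < n" "Perm.apply w j < Perm.apply w (Suc j)" using asc_prop[OF less(2) nw0] j_def by auto
  have Fw: "F n w = divdiff j (F n (w * sref j))"
    using less(2) nw0 by (subst F.simps) (simp add: j_def)
  have ji: "j \<le> i" using asc_least[OF less(3,4)] j_def by simp
  show ?case
  proof (cases "j = i")
    case True then show ?thesis using Fw by simp
  next
    case False
    with ji have "j < i" by simp
    show ?thesis
    proof (cases "i = Suc j")
      case False
      with \<open>j < i\<close> have ij: "Suc j < i" by simp
      have s1: "inS n (w * sref j)" "n * n - len (w * sref j) < n * n - len w"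
        using ascent_step[OF less(2) j] by simp_all
      have a1: "Perm.apply (w * sref j) i < Perm.apply (w * sref j) (Suc i)"
        using less(4) ij by (simp add: apply_wsref)
      have e1: "F n (w * sref j) = divdiff i (F n (w * sref j * sref i))"
        using IH[OF s1(1) less(3) a1 s1(2)] .
      have s2: "inS n (w * sref i)" "n * n - len (w * sref i) < n * n - len w"
        using ascent_step[OF less(2,3,4)] by simp_all
      have a2: "Perm.apply (w * sref i) j < Perm.apply (w * sref i) (Suc j)"
        using j(2) ij by (simp add: apply_wsref)
      have e2: "F n (w * sref i) = divdiff j (F n (w * sref i * sref j))"
        using IH[OF s2(1) j(1) a2 s2(2)] .
      have "w * sref j * sref i = w * sref i * sref j"
        using sref_comm[of j i] ij by (simp add: mult.assoc)
      then show ?thesis using Fw e1 e2 dd_comm[of j i] ij by simp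
    next
      case True
      note i = True
      have a0: "Perm.apply w (Suc j) < Perm.apply w (Suc (Suc j))" using less(4) i by simp
      have n2: "Suc (Suc j) < n" using less(3) i by simp
      have s1: "inS n (w * sref j)" "n * n - len (w * sref j) < n * n - len w"
           "len (w * sref j) = Suc (len w)"
        using ascent_step[OF less(2) j] by simp_all
      have a1: "Perm.apply (w * sref j) (Suc j) < Perm.apply (w * sref j) (Suc (Suc j))"
        using j(2) a0 by (simp add: apply_wsref)
      have s1': "inS n (w * sref j * sref (Suc j))" "len (w * sref j * sref (Suc j)) = Suc (Suc (len w))"
        using ascent_step[OF s1(1) n2 a1] s1(3) by simp_all
      have a1': "Perm.apply (w * sref j * sref (Suc j)) j < Perm.apply (w * sref j * sref (Suc j)) (Suc j)"
        using a0 by (simp add: apply_wsref)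
      have m1': "n * n - len (w * sref j * sref (Suc j)) < n * n - len w"
        using len_le[OF s1'(1)] s1'(2) by simp
      have e1: "F n (w * sref j) = divdiff (Suc j) (F n (w * sref j * sref (Suc j)))"
        using IH[OF s1(1) n2 a1 s1(2)] .
      have e1': "F n (w * sref j * sref (Suc j)) = divdiff j (F n (w * sref j * sref (Suc j) * sref j))"
        using IH[OF s1'(1) j(1) a1' m1'] .
      have s2: "inS n (w * sref (Suc j))" "n * n - len (w * sref (Suc j)) < n * n - len w"
           "len (w * sref (Suc j)) = Suc (len w)"
        using ascent_step[OF less(2) n2 a0] by simp_all
      have a2: "Perm.apply (w * sref (Suc j)) j < Perm.apply (w * sref (Suc j)) (Suc j)"
        using j(2) a0 by (simp add: apply_wsref)
      have s2': "inS n (w * sref (Suc j) * sref j)" "len (w * sref (Suc j) * sref j) = Suc (Suc (len w))"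
        using ascent_step[OF s2(1) j(1) a2] s2(3) by simp_all
      have a2': "Perm.apply (w * sref (Suc j) * sref j) (Suc j) < Perm.apply (w * sref (Suc j) * sref j) (Suc (Suc j))"
        using j(2) by (simp add: apply_wsref)
      have m2': "n * n - len (w * sref (Suc j) * sref j) < n * n - len w"
        using len_le[OF s2'(1)] s2'(2) by simp
      have e2: "F n (w * sref (Suc j)) = divdiff j (F n (w * sref (Suc j) * sref j))"
        using IH[OF s2(1) j(1) a2 s2(2)] .
      have e2': "F n (w * sref (Suc j) * sref j) = divdiff (Suc j) (F n (w * sref (Suc j) * sref j * sref (Suc j)))"
        using IH[OF s2'(1) n2 a2' m2'] .
      have z: "w * sref j * sref (Suc j) * sref j = w * sref (Suc j) * sref j * sref (Suc j)"
        using sref_braid[of j] by (simp add: mult.assoc)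
      show ?thesis using Fw e1 e1' e2 e2' z dd_braid[of j] i by simp
    qed
  qed
qed

lemma uniq_on_S:
  assumes "G (w0 n) = H (w0 n)"
    and G: "\<And>w i. inS n w \<Longrightarrow> Suc i < n \<Longrightarrow> Perm.apply w i < Perm.apply w (Suc i) \<Longrightarrow> G w = divdiff i (G (w * sref i))"
    and H: "\<And>w i. inS n w \<Longrightarrow> Suc i < n \<Longrightarrow> Perm.apply w i < Perm.apply w (Suc i) \<Longrightarrow> H w = divdiff i (H (w * sref i))"
    and "inS n w"
  shows "G w = H w"
  using assms(4)
proof (induct "n * n - len w" arbitrary: w rule: less_induct)
  case less
  show ?case
  proof (cases "w = w0 n")
    case True then show ?thesis using assms(1) by simp
  next
    case False
    then obtain i where i: "Suc i < n" "Perm.apply w i < Perm.apply w (Suc i)"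
      using not_w0_ascent[OF less(2)] by blast
    have s: "inS n (w * sref i)" "n * n - len (w * sref i) < n * n - len w"
      using ascent_step[OF less(2) i] by simp_all
    show ?thesis using G[OF less(2) i] H[OF less(2) i] less(1)[OF s(2) s(1)] by simp
  qed
qed

primrec cyc :: "nat \<Rightarrow> nat perm" where
  "cyc 0 = 1"
| "cyc (Suc k) = cyc k * sref k"

lemma apply_cyc: "Perm.apply (cyc k) j = (if j < k then Suc j else if j = k then 0 else j)"
  by (induct k arbitrary: j) (auto simp: apply_times apply_sref)

definition chain :: "nat \<Rightarrow> nat \<Rightarrow> qpoly" where
  "chain n k = (\<Prod>j<Suc n. var j ^ (if j < k then n - 1 - j else n - j))"

lemma prod_split2:
  assumes "Suc k < Suc n"
  shows "(\<Prod>j<Suc n. g j) = g k * g (Suc k) * (\<Prod>j\<in>{..<Suc n} - {k, Suc k}. g j)"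
proof -
  have "(\<Prod>j<Suc n. g j) = g k * (\<Prod>j\<in>{..<Suc n} - {k}. g j)"
    using assms by (intro prod.remove) auto
  also have "(\<Prod>j\<in>{..<Suc n} - {k}. g j) = g (Suc k) * (\<Prod>j\<in>{..<Suc n} - {k} - {Suc k}. g j)"
    using assms by (intro prod.remove) auto
  also have "{..<Suc n} - {k} - {Suc k} = {..<Suc n} - {k, Suc k}" by auto
  finally show ?thesis by (simp add: mult.assoc)
qed

lemma swap_vars_sym_prod:
  assumes "\<And>j. j \<in> A \<Longrightarrow> j \<noteq> k \<and> j \<noteq> Suc k"
  shows "swap_vars k (\<Prod>j\<in>A. var j ^ e j) = (\<Prod>j\<in>A. var j ^ e j)"
  unfolding swap_vars_prod using assms by (intro prod.cong) (auto simp: swap_vars_var apply_sref)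

lemma chain_step:
  assumes "k < n"
  shows "divdiff k (chain n k) = chain n (Suc k)"
proof -
  define A where "A = {..<Suc n} - {k, Suc k}"
  define g where "g = (\<lambda>j. var j ^ (if j < k then n - 1 - j else n - j))"
  define g' where "g' = (\<lambda>j. var j ^ (if j < Suc k then n - 1 - j else n - j))"
  define R where "R = (\<Prod>j\<in>A. g j)"
  have R2: "(\<Prod>j\<in>A. g' j) = R"
    unfolding R_def A_def g_def g'_def by (intro prod.cong) auto
  define m where "m = n - Suc k"
  have nk: "n - k = Suc m" using assms m_def by simp
  have sk: "Suc k < Suc n" using assms by simp
  have "chain n k = g k * g (Suc k) * R"
    unfolding chain_def R_def A_def g_def[symmetric] by (rule prod_split2[OF sk])
  also have "g k = var k ^ Suc m" using nk by (simp add: g_def)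
  also have "g (Suc k) = var (Suc k) ^ m" by (simp add: g_def m_def)
  finally have c1: "chain n k = (R * (var k * var (Suc k)) ^ m) * var k"
    by (simp only: power_Suc power_mult_distrib) (simp add: ac_simps)
  have "chain n (Suc k) = g' k * g' (Suc k) * R"
    unfolding chain_def R2[symmetric] A_def g'_def[symmetric] by (rule prod_split2[OF sk])
  also have "g' k = var k ^ m" by (simp add: g'_def m_def)
  also have "g' (Suc k) = var (Suc k) ^ m" by (simp add: g'_def m_def)
  finally have c2: "chain n (Suc k) = R * (var k * var (Suc k)) ^ m"
    by (simp only: power_mult_distrib) (simp add: ac_simps)
  have sR: "swap_vars k R = R" unfolding R_def A_def g_def by (rule swap_vars_sym_prod) auto
  have sv: "swap_vars k (var k * var (Suc k)) = var k * var (Suc k)"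
    by (simp add: swap_vars_var apply_sref mult.commute)
  have sym: "swap_vars k (R * (var k * var (Suc k)) ^ m) = R * (var k * var (Suc k)) ^ m"
    by (simp only: swap_vars_mult[of k R] swap_vars_power sR sv)
  show ?thesis unfolding c1 c2 using dd_mult_sym[OF sym, of "var k"] dd_var_self by simp
qed

lemma chain_0: "chain n 0 = staircase (Suc n)"
  by (simp add: chain_def staircase_def)

lemma chain_n: "chain n n = staircase n"
  by (simp add: chain_def staircase_def)

lemma F_chain:
  assumes "k \<le> n"
  shows "F (Suc n) (w0 (Suc n) * cyc k) = chain n k"
  using assms
proof (induct k)
  case 0 then show ?case by (simp add: F_w0 chain_0)
next
  case (Suc k)
  let ?x = "w0 (Suc n) * cyc (Suc k)"
  have inS: "inS (Suc n) ?x"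
  proof -
    have "inS (Suc n) (cyc (Suc k))" using Suc(2) by (simp add: inS_def apply_cyc del: cyc.simps)
    then show ?thesis using inS_times inS_w0 by blast
  qed
  have a: "Perm.apply ?x k < Perm.apply ?x (Suc k)"
    using Suc(2) by (simp add: apply_times apply_cyc apply_w0 del: cyc.simps)
  have "F (Suc n) ?x = divdiff k (F (Suc n) (?x * sref k))"
    using F_asc[OF inS _ a] Suc(2) by simp
  also have "?x * sref k = w0 (Suc n) * cyc k" by (simp add: mult.assoc)
  finally show ?case using Suc chain_step[of k n] by simp
qed

lemma w0_cyc: "w0 (Suc n) * cyc n = w0 n"
  by (rule perm_eqI) (auto simp: apply_times apply_cyc apply_w0)

lemma F_Suc_w0: "F (Suc n) (w0 n) = staircase n"
  using F_chain[of n n] by (simp add: w0_cyc chain_n)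

lemma F_stable: assumes "inS n w" shows "F (Suc n) w = F n w"
proof (rule uniq_on_S[where G = "F (Suc n)" and H = "F n" and n = n])
  show "F (Suc n) (w0 n) = F n (w0 n)" by (simp only: F_Suc_w0 F_w0)
next
  fix w i assume a: "inS n w" "Suc i < n" "Perm.apply w i < Perm.apply w (Suc i)"
  show "F (Suc n) w = divdiff i (F (Suc n) (w * sref i))"
  proof -
    have "inS (Suc n) w" using inS_mono[OF a(1), of "Suc n"] by simp
    moreover have "Suc i < Suc n" using a(2) by simp
    ultimately show ?thesis using F_asc[of "Suc n" w i] a(3) by blast
  qed
next
  fix w i assume "inS n w" "Suc i < n" "Perm.apply w i < Perm.apply w (Suc i)"
  then show "F n w = divdiff i (F n (w * sref i))" by (rule F_asc)
next
  show "inS n w" by (rule assms)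
qed

lemma F_stable_le: assumes "inS n w" "n \<le> m" shows "F m w = F n w"
  using assms(2)
proof (induct m rule: dec_induct)
  case base then show ?case by simp
next
  case (step m)
  have "inS m w" using inS_mono[OF assms(1) step(1)] .
  then show ?case using F_stable[of m w] step(3) by simp
qed

definition Sch :: "nat perm \<Rightarrow> qpoly" where
  "Sch w = F (SOME n. inS n w) w"

lemma Sch_F: "inS n w \<Longrightarrow> Sch w = F n w"
proof -
  assume n: "inS n w"
  define m where "m = (SOME n. inS n w)"
  have m: "inS m w" unfolding m_def by (rule someI_ex) (rule ex_inS)
  have "F (max m n) w = F m w" using F_stable_le[OF m, of "max m n"] by simp
  moreover have "F (max m n) w = F n w" using F_stable_le[OF n, of "max m n"] by simp
  ultimately have "F m w = F n w" by simp
  then show ?thesis unfolding Sch_def m_def[symmetric] by simp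
qed

lemma Sch_family: "is_schubert_family Sch"
  unfolding is_schubert_family_def
proof (intro conjI allI impI)
  fix n :: nat
  show "Sch (w0 n) = staircase n" using Sch_F[OF inS_w0] F_w0 by simp
next
  fix w i
  obtain n0 where n0: "inS n0 w" using ex_inS by blast
  define n where "n = max n0 (Suc (Suc i))"
  have n: "inS n w" "Suc i < n" using inS_mono[OF n0] n_def by auto
  have ns: "inS n (w * sref i)" using inS_times[OF n(1) inS_sref[OF n(2)]] .
  show "divdiff i (Sch w) = (if len (w * sref i) + 1 = len w then Sch (w * sref i) else 0)"
  proof (cases "Perm.apply w i < Perm.apply w (Suc i)")
    case True
    then have "F n w = divdiff i (F n (w * sref i))" using F_asc n by blast
    moreover have "len (w * sref i) = Suc (len w)" using len_ascent[OF True] .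
    ultimately show ?thesis using Sch_F[OF n(1)] by simp
  next
    case False
    then have d: "Perm.apply w (Suc i) < Perm.apply w i"
      using apply_inj[of w i "Suc i"] by (metis linorder_neqE_nat n_not_Suc_n)
    have a: "Perm.apply (w * sref i) i < Perm.apply (w * sref i) (Suc i)"
      using d by (simp add: apply_wsref)
    have "F n (w * sref i) = divdiff i (F n (w * sref i * sref i))" using F_asc[OF ns n(2) a] .
    moreover have "len w = Suc (len (w * sref i))" using len_descent[OF d] .
    ultimately show ?thesis using Sch_F[OF n(1)] Sch_F[OF ns] by (simp add: mult.assoc)
  qed
qed

lemma family_unique:
  assumes T: "is_schubert_family T"
  shows "T = Sch"
proof
  fix w
  obtain n0 where n0: "inS n0 w" using ex_inS by blast
  define n where "n = max n0 1"
  have n: "inS n w" "1 \<le> n" using inS_mono[OF n0] n_def by auto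
  have "T w = F n w"
  proof (rule uniq_on_S[where n = n])
    show "T (w0 n) = F n (w0 n)" using T n(2) by (simp add: is_schubert_family_def F_w0)
  next
    fix x i assume x: "inS n x" "Suc i < n" "Perm.apply x i < Perm.apply x (Suc i)"
    have "len (x * sref i) = Suc (len x)" using len_ascent[OF x(3)] .
    moreover have "len (x * sref i * sref i) = len x" by (simp add: mult.assoc)
    moreover have "divdiff i (T (x * sref i)) = (if len (x * sref i * sref i) + 1 = len (x * sref i)
        then T (x * sref i * sref i) else 0)"
      using T unfolding is_schubert_family_def by blast
    moreover have "x * sref i * sref i = x" by (simp add: mult.assoc)
    ultimately show "T x = divdiff i (T (x * sref i))" by simp
  next
    fix x i assume "inS n x" "Suc i < n" "Perm.apply x i < Perm.apply x (Suc i)"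
    then show "F n x = divdiff i (F n (x * sref i))" by (rule F_asc)
  qed (rule n(1))
  then show "T w = Sch w" using Sch_F[OF n(1)] by simp
qed

lemma schubert_eq: "schubert = Sch"
  unfolding schubert_def
  by (rule the_equality) (rule Sch_family, rule family_unique)

lemma Sch_one: "Sch 1 = 1"
proof -
  have "w0 0 = 1" by (rule perm_eqI) (simp add: apply_w0)
  then have "F 0 1 = staircase 0" using F_w0[of 0] by simp
  then show ?thesis using Sch_F[of 0 1] by (simp add: staircase_def)
qed

definition degm :: "(nat \<Rightarrow>\<^sub>0 nat) \<Rightarrow> nat" where
  "degm m = (\<Sum>k\<in>Poly_Mapping.keys m. Poly_Mapping.lookup m k)"

lemma degm_superset: "finite S \<Longrightarrow> Poly_Mapping.keys m \<subseteq> S \<Longrightarrow> degm m = (\<Sum>k\<in>S. Poly_Mapping.lookup m k)"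
  unfolding degm_def by (rule sum.mono_neutral_left) (auto simp: in_keys_iff)

lemma degm_add: "degm (a + b) = degm a + degm b"
proof -
  let ?S = "Poly_Mapping.keys a \<union> Poly_Mapping.keys b"
  have f: "finite ?S" by simp
  have "Poly_Mapping.keys (a + b) \<subseteq> ?S" by (auto simp: in_keys_iff lookup_add)
  then have "degm (a + b) = (\<Sum>k\<in>?S. Poly_Mapping.lookup (a + b) k)" using degm_superset f by blast
  also have "... = (\<Sum>k\<in>?S. Poly_Mapping.lookup a k) + (\<Sum>k\<in>?S. Poly_Mapping.lookup b k)"
    by (simp add: lookup_add sum.distrib)
  also have "... = degm a + degm b" using degm_superset[OF f, of a] degm_superset[OF f, of b] by auto
  finally show ?thesis .
qed

lemma degm_zero [simp]: "degm 0 = 0"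
  by (simp add: degm_def)

lemma degm_single: "degm (Poly_Mapping.single j k) = k"
  by (cases "k = 0") (simp_all add: degm_def)

lemma degm_mk: "degm (mk i m) = degm m"
proof -
  let ?s = "Perm.apply (sref i)"
  have im: "x \<in> ?s ` A \<longleftrightarrow> ?s x \<in> A" for x A
    by (metis image_eqI imageE sref_invol)
  have k: "Poly_Mapping.keys (mk i m) = ?s ` Poly_Mapping.keys m"
    by (rule set_eqI) (simp add: im in_keys_iff lookup_mk)
  have "degm (mk i m) = (\<Sum>k\<in>?s ` Poly_Mapping.keys m. Poly_Mapping.lookup (mk i m) k)"
    unfolding degm_def k ..
  also have "... = (\<Sum>k\<in>Poly_Mapping.keys m. Poly_Mapping.lookup (mk i m) (?s k))"
    by (subst sum.reindex) (simp_all add: inj_on_def apply_inj o_def)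
  also have "... = degm m" by (simp add: lookup_mk degm_def)
  finally show ?thesis .
qed

definition scl :: "qpoly \<Rightarrow> qpoly" where
  "scl f = Abs_poly_mapping (\<lambda>m. 2 ^ degm m * Poly_Mapping.lookup f m)"

lemma lookup_scl: "Poly_Mapping.lookup (scl f) m = 2 ^ degm m * Poly_Mapping.lookup f m"
proof -
  have "finite {m. 2 ^ degm m * Poly_Mapping.lookup f m \<noteq> (0::rat)}"
    by (rule finite_subset[of _ "Poly_Mapping.keys f"]) (auto simp: in_keys_iff)
  then show ?thesis unfolding scl_def by simp
qed

lemma scl_add [simp]: "scl (f + g) = scl f + scl g"
  by (rule poly_mapping_eqI) (simp add: lookup_scl lookup_add algebra_simps)

lemma scl_single: "scl (Poly_Mapping.single m c) = Poly_Mapping.single m (2 ^ degm m * c)"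
  by (rule poly_mapping_eqI) (simp add: lookup_scl lookup_single when_def)

lemma scl_mult [simp]: "scl (f * g) = scl f * scl g"
  by (rule mult_hom) (simp_all add: mult_single scl_single degm_add power_add mult_ac)

lemma scl_one [simp]: "scl 1 = 1"
  using scl_single[of 0 1] by simp

lemma swap_vars_numeral [simp]: "swap_vars i (numeral n) = numeral n"
  using swap_vars_const[of i "numeral n"] by simp

lemma scl_zero [simp]: "scl 0 = 0"
  using scl_add[of 0 0] by simp

lemma scl_uminus [simp]: "scl (- f) = - scl f"
  using scl_add[of f "- f"] by (simp add: add_eq_0_iff2)

lemma scl_diff [simp]: "scl (f - g) = scl f - scl g"
  using scl_add[of f "- g"] by simp

lemma scl_swap: "scl (swap_vars i f) = swap_vars i (scl f)"
  by (rule additive_eq[where \<phi> = "\<lambda>f. scl (swap_vars i f)" and \<psi> = "\<lambda>f. swap_vars i (scl f)"])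
     (simp_all add: swap_vars_single scl_single degm_mk)

lemma const_eq: "(c::qpoly) = Poly_Mapping.single 0 (Poly_Mapping.lookup c 0) \<Longrightarrow> True" by simp

lemma two_pow: "(2::qpoly) ^ k = Poly_Mapping.single 0 (2 ^ k)"
proof (induct k)
  case (Suc k)
  have "(2::qpoly) ^ Suc k = Poly_Mapping.single 0 2 * Poly_Mapping.single 0 (2 ^ k)"
    by (simp add: Suc mult.commute)
  have "Poly_Mapping.single 0 (2 * 2 ^ k) = Poly_Mapping.single 0 2 * Poly_Mapping.single 0 ((2::rat) ^ k)"
    by (simp only: mult_single add_0)
  then show ?case using Suc by (metis power_Suc single_numeral)
qed simp

lemma scl_var: "scl (var j) = 2 * var j"
  by (simp add: var_def scl_single degm_single mult_single flip: single_numeral)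

lemma scl_var_pow: "scl (var j ^ k) = 2 ^ k * var j ^ k"
  by (induct k) (simp_all add: scl_var power_mult_distrib algebra_simps)

lemma scl_prod: "scl (prod g A) = (\<Prod>a\<in>A. scl (g a))"
  by (induct A rule: infinite_finite_induct) simp_all

lemma scl_dlt: "scl (dlt i) = 2 * dlt i"
  by (simp add: dlt_def scl_var algebra_simps)

definition hom :: "nat \<Rightarrow> qpoly \<Rightarrow> bool" where
  "hom E f \<longleftrightarrow> scl f = 2 ^ E * f"

lemma hom_dd:
  assumes "hom (Suc E) f"
  shows "hom E (divdiff i f)"
proof -
  have "scl (dlt i * divdiff i f) = scl (f - swap_vars i f)" by (simp add: divdiff_char)
  then have "2 * dlt i * scl (divdiff i f) = 2 ^ Suc E * (f - swap_vars i f)"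
    using assms by (simp add: scl_swap scl_dlt hom_def algebra_simps)
  also have "... = 2 * dlt i * (2 ^ E * divdiff i f)"
    by (simp add: divdiff_char[symmetric] algebra_simps)
  finally have "2 * dlt i * scl (divdiff i f) = 2 * dlt i * (2 ^ E * divdiff i f)" .
  moreover have "2 * dlt i \<noteq> 0" using dlt_nz by simp
  ultimately show ?thesis unfolding hom_def by simp
qed

lemma hom_const0:
  assumes "hom E f" "0 < E"
  shows "Poly_Mapping.lookup f 0 = 0"
proof -
  have "Poly_Mapping.lookup (scl f) 0 = Poly_Mapping.lookup f 0" by (simp add: lookup_scl)
  moreover have "Poly_Mapping.lookup (2 ^ E * f) 0 = 2 ^ E * Poly_Mapping.lookup f 0"
    by (simp add: two_pow flip: mult_map_scale_conv_mult) (simp add: Poly_Mapping.map.rep_eq when_def)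
  ultimately have "Poly_Mapping.lookup f 0 = 2 ^ E * Poly_Mapping.lookup f 0" using assms(1) by (simp add: hom_def)
  moreover have "(1::rat) < 2 ^ E" by (rule one_less_power) (simp_all add: assms(2))
  ultimately show ?thesis by (metis less_irrefl mult_cancel_right2)
qed

lemma len_w0: "len (w0 n) = (\<Sum>i<n. n - 1 - i)"
proof -
  have "invs (w0 n) = (SIGMA a:{..<n}. {a<..<n})"
    by (auto simp: invs_def apply_w0)
  then have "len (w0 n) = card (SIGMA a:{..<n}. {a<..<n})" by (simp add: len_invs)
  also have "... = (\<Sum>a<n. card {a<..<n})" by (rule card_SigmaI) auto
  finally show ?thesis by simp
qed

lemma hom_staircase: "hom (len (w0 n)) (staircase n)"
  unfolding hom_def len_w0 staircase_def
  by (simp add: scl_prod scl_var_pow prod.distrib power_sum)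

lemma hom_F: "inS n w \<Longrightarrow> hom (len w) (F n w)"
proof (induct "n * n - len w" arbitrary: w rule: less_induct)
  case less
  show ?case
  proof (cases "w = w0 n")
    case True then show ?thesis using hom_staircase by (simp add: F_w0)
  next
    case False
    then obtain i where i: "Suc i < n" "Perm.apply w i < Perm.apply w (Suc i)"
      using not_w0_ascent[OF less(2)] by blast
    have s: "inS n (w * sref i)" "n * n - len (w * sref i) < n * n - len w" "len (w * sref i) = Suc (len w)"
      using ascent_step[OF less(2) i] by simp_all
    have "hom (Suc (len w)) (F n (w * sref i))" using less(1)[OF s(2) s(1)] s(3) by simp
    then show ?thesis using F_asc[OF less(2) i] hom_dd by simp
  qed
qed

lemma hom_Sch: "hom (len w) (Sch w)"
  using ex_inS[of w] Sch_F hom_F by metis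

lemma ct_Sch: "w \<noteq> 1 \<Longrightarrow> Poly_Mapping.lookup (Sch w) 0 = 0"
  using hom_const0[OF hom_Sch] len_eq0_iff by auto

lemma add_eq_0_pm: "(a + b = (0::nat \<Rightarrow>\<^sub>0 nat)) \<longleftrightarrow> a = 0 \<and> b = 0"
proof
  assume "a + b = 0"
  then have "Poly_Mapping.lookup a k = 0 \<and> Poly_Mapping.lookup b k = 0" for k
    by (metis add_is_0 lookup_add lookup_zero)
  then show "a = 0 \<and> b = 0" by (auto intro: poly_mapping_eqI)
qed simp

lemma ct_mult: "Poly_Mapping.lookup ((f::qpoly) * g) 0 = Poly_Mapping.lookup f 0 * Poly_Mapping.lookup g 0"
proof -
  have s: "Poly_Mapping.lookup (Poly_Mapping.single a c * g) 0 = Poly_Mapping.lookup (Poly_Mapping.single a c) 0 * Poly_Mapping.lookup g 0" for a c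
    by (induct g rule: poly_induct) (auto simp: distrib_left lookup_add mult_single lookup_single when_def add_eq_0_pm)
  show ?thesis
    by (induct f rule: poly_induct) (simp_all add: distrib_right lookup_add s)
qed

lemma lookup_swap_vars: "Poly_Mapping.lookup (swap_vars i f) m = Poly_Mapping.lookup f (mk i m)"
  unfolding swap_vars_alt using inj_mk[of i] by (simp add: map_key.rep_eq)

primrec sh :: "nat \<Rightarrow> nat \<Rightarrow> (nat \<Rightarrow>\<^sub>0 nat) \<Rightarrow> (nat \<Rightarrow>\<^sub>0 nat)" where
  "sh j 0 m = m"
| "sh j (Suc d) m = mk (j + d) (sh j d m)"

lemma lookup_sh:
  assumes "\<And>k. j < k \<Longrightarrow> Poly_Mapping.lookup m k = 0"
  shows "Poly_Mapping.lookup (sh j d m) k =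
    (if k = j + d then Poly_Mapping.lookup m j else if j \<le> k then 0 else Poly_Mapping.lookup m k)"
proof (induct d arbitrary: k)
  case 0 then show ?case using assms by auto
next
  case (Suc d)
  show ?case by (simp add: lookup_mk Suc apply_sref)
qed

lemma sym_const:
  assumes "\<And>i. swap_vars i f = f"
  shows "f = Poly_Mapping.single 0 (Poly_Mapping.lookup f 0)"
proof (rule poly_mapping_eqI)
  fix m
  show "Poly_Mapping.lookup f m = Poly_Mapping.lookup (Poly_Mapping.single 0 (Poly_Mapping.lookup f 0)) m"
  proof (cases "m = 0")
    case True then show ?thesis by simp
  next
    case False
    then have ne: "Poly_Mapping.keys m \<noteq> {}" by simp
    define j where "j = Max (Poly_Mapping.keys m)"
    have jk: "j \<in> Poly_Mapping.keys m" using ne j_def by simp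
    have mx: "Poly_Mapping.lookup m k = 0" if "j < k" for k
      using that j_def by (metis Max_ge finite_keys in_keys_iff not_le)
    have inv: "Poly_Mapping.lookup f (mk i x) = Poly_Mapping.lookup f x" for i x
      using assms[of i] lookup_swap_vars[of i f x] by simp
    have shinv: "Poly_Mapping.lookup f (sh j d m) = Poly_Mapping.lookup f m" for d
      by (induct d) (simp_all add: inv)
    define V where "V = \<Union> (Poly_Mapping.keys ` Poly_Mapping.keys f)"
    have "finite V" by (simp add: V_def)
    then obtain b where b: "\<forall>x\<in>V. x < b" using finite_nat_set_iff_bounded by blast
    have "Poly_Mapping.lookup (sh j b m) (j + b) = Poly_Mapping.lookup m j"
      using lookup_sh[OF mx] by simp
    then have "j + b \<in> Poly_Mapping.keys (sh j b m)" using jk by (simp add: in_keys_iff)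
    then have "sh j b m \<notin> Poly_Mapping.keys f" using b V_def by fastforce
    then have "Poly_Mapping.lookup f m = 0" using shinv[of b] by (simp add: in_keys_iff)
    then show ?thesis using False by (simp add: lookup_single when_def)
  qed
qed

definition Phi :: "nat perm \<Rightarrow> qpoly" where
  "Phi w = (\<Sum>(u, v)\<in>red w. (-1) ^ len v * Sch (inverse v) * Sch u)"

lemma dd_Sch: "divdiff i (Sch x) = (if len (x * sref i) + 1 = len x then Sch (x * sref i) else 0)"
  using Sch_family unfolding is_schubert_family_def by blast

lemma len_left: "len (sref i * v) = len (inverse v * sref i)"
  using len_inverse[of "sref i * v"] by simp

lemma len_sref_cases': "len (x * sref i) + 1 = len x \<or> len (x * sref i) = Suc (len x)"
  using len_sref_cases[of x i] by auto

lemma not_both: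
  assumes "(u, v) \<in> red w" "len (u * sref i) + 1 = len u"
    and "len (inverse v * sref i) + 1 = len (inverse v)"
  shows False
proof -
  have w: "w = u * v" "len w = len u + len v" using assms(1) by (auto simp: red_def)
  have "w = (u * sref i) * (sref i * v)" using w by (simp add: mult.assoc flip: mult.assoc[of "sref i"])
  then have "len w \<le> len (u * sref i) + len (sref i * v)" using len_subadd by metis
  then show False using w assms(2,3) len_left[of i v] len_inverse[of v] by simp
qed

lemma phiA:
  assumes "(u, v) \<in> red w" "len (inverse v * sref i) + 1 = len (inverse v)"
  shows "(u * sref i, sref i * v) \<in> red w" "len (u * sref i * sref i) + 1 = len (u * sref i)"
    "len v = Suc (len (sref i * v))"
proof -
  have w: "w = u * v" "len w = len u + len v" using assms(1) by (auto simp: red_def)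
  have nu: "len (u * sref i) = Suc (len u)" using len_sref_cases'[of u i] not_both[OF assms(1) _ assms(2)] by blast
  have lv: "len v = Suc (len (sref i * v))" using assms(2) len_left[of i v] len_inverse[of v] by simp
  have "w = (u * sref i) * (sref i * v)" using w by (simp add: mult.assoc flip: mult.assoc[of "sref i"])
  then show "(u * sref i, sref i * v) \<in> red w" using w nu lv by (simp add: red_def)
  show "len (u * sref i * sref i) + 1 = len (u * sref i)" using nu by (simp add: mult.assoc)
  show "len v = Suc (len (sref i * v))" by (rule lv)
qed

lemma phiB:
  assumes "(u, v) \<in> red w" "len (u * sref i) + 1 = len u"
  shows "(u * sref i, sref i * v) \<in> red w"
    "len (inverse (sref i * v) * sref i) + 1 = len (inverse (sref i * v))"
proof -
  have w: "w = u * v" "len w = len u + len v" using assms(1) by (auto simp: red_def)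
  have w': "w = (u * sref i) * (sref i * v)" using w by (simp add: mult.assoc flip: mult.assoc[of "sref i"])
  then have "len w \<le> len (u * sref i) + len (sref i * v)" using len_subadd by metis
  moreover have "len (sref i * v) \<le> Suc (len v)"
    using len_left[of i v] len_sref_le[of "inverse v" i] len_inverse[of v] by simp
  ultimately have e: "len (sref i * v) = Suc (len v)" using w assms(2) by simp
  then show "(u * sref i, sref i * v) \<in> red w" using w w' assms(2) by (simp add: red_def)
  have "inverse (sref i * v) * sref i = inverse v" by (simp add: mult.assoc)
  then show "len (inverse (sref i * v) * sref i) + 1 = len (inverse (sref i * v))"
    using e len_inverse[of v] len_inverse[of "sref i * v"] by simp
qed

lemma dd_Phi: "divdiff i (Phi w) = 0"
proof -
  let ?s = "sref i"
  let ?DA = "\<lambda>p. len (inverse (snd p) * ?s) + 1 = len (inverse (snd p))"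
  let ?DB = "\<lambda>p. len (fst p * ?s) + 1 = len (fst p)"
  define gA where "gA = (\<lambda>p. (-1) ^ len (snd p) * Sch (inverse (snd p) * ?s) * Sch (fst p) :: qpoly)"
  define gB where "gB = (\<lambda>p. (-1) ^ len (snd p) * Sch (inverse (snd p)) * Sch (fst p * ?s) :: qpoly)"
  have sg: "swap_vars i ((-1) ^ k) = (-1) ^ k" for k by simp
  have trm: "divdiff i ((-1) ^ len (snd p) * Sch (inverse (snd p)) * Sch (fst p)) =
      (if ?DA p then gA p else 0) + (if ?DB p then gB p else 0)" if p: "p \<in> red w" for p
  proof -
    obtain u v where uv: "p = (u, v)" by (cases p)
    have "divdiff i ((-1) ^ len v * Sch (inverse v) * Sch u) =
       (-1) ^ len v * divdiff i (Sch (inverse v) * Sch u)"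
      by (simp only: mult.assoc dd_mult_sym[OF sg])
    also have "... = (-1) ^ len v * (divdiff i (Sch (inverse v)) * Sch u + Sch (inverse v) * divdiff i (Sch u)
        - dlt i * divdiff i (Sch (inverse v)) * divdiff i (Sch u))"
      by (simp only: dd_mult)
    finally have e: "divdiff i ((-1) ^ len v * Sch (inverse v) * Sch u) =
      (-1) ^ len v * (divdiff i (Sch (inverse v)) * Sch u + Sch (inverse v) * divdiff i (Sch u)
        - dlt i * divdiff i (Sch (inverse v)) * divdiff i (Sch u))" .
    have nb: "len (u * sref i) + 1 = len u \<Longrightarrow> len (inverse v * sref i) + 1 = len (inverse v) \<Longrightarrow> False"
      using not_both[of u v w i] p uv by blast
    show ?thesis unfolding uv fst_conv snd_conv e dd_Sch[of i "inverse v"] dd_Sch[of i u]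
      using nb by (auto simp: gA_def gB_def mult.assoc)
  qed
  have fin: "finite (red w)" by (rule finite_red)
  have "divdiff i (Phi w) = (\<Sum>p\<in>red w. divdiff i ((-1) ^ len (snd p) * Sch (inverse (snd p)) * Sch (fst p)))"
    unfolding Phi_def dd_sum by (simp add: case_prod_beta)
  also have "... = (\<Sum>p\<in>red w. (if ?DA p then gA p else 0)) + (\<Sum>p\<in>red w. (if ?DB p then gB p else 0))"
    by (simp add: trm sum.distrib)
  also have "... = (\<Sum>p\<in>{p\<in>red w. ?DA p}. gA p) + (\<Sum>p\<in>{p\<in>red w. ?DB p}. gB p)"
    by (simp add: sum.inter_filter[OF fin])
  also have "(\<Sum>p\<in>{p\<in>red w. ?DA p}. gA p) = (\<Sum>p\<in>{p\<in>red w. ?DB p}. - gB p)"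
  proof (rule sum.reindex_bij_witness[where i = "\<lambda>(u, v). (u * ?s, ?s * v)" and j = "\<lambda>(u, v). (u * ?s, ?s * v)"])
    fix p assume "p \<in> {p \<in> red w. ?DA p}"
    then obtain u v where p: "p = (u, v)" "(u, v) \<in> red w" "len (inverse v * ?s) + 1 = len (inverse v)" by (cases p) auto
    show "(case (case p of (u, v) \<Rightarrow> (u * ?s, ?s * v)) of (u, v) \<Rightarrow> (u * ?s, ?s * v)) = p"
      using p by (simp add: mult.assoc flip: mult.assoc[of "?s"])
    show "(case p of (u, v) \<Rightarrow> (u * ?s, ?s * v)) \<in> {p \<in> red w. ?DB p}"
      using phiA[OF p(2,3)] p(1) by simp
    have l: "len v = Suc (len (?s * v))" using phiA[OF p(2,3)] by simp
    have "inverse (?s * v) = inverse v * ?s" by simp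
    then show "- gB (case p of (u, v) \<Rightarrow> (u * ?s, ?s * v)) = gA p"
      using p(1) l by (simp add: gA_def gB_def mult.assoc)
  next
    fix p assume "p \<in> {p \<in> red w. ?DB p}"
    then obtain u v where p: "p = (u, v)" "(u, v) \<in> red w" "len (u * ?s) + 1 = len u" by (cases p) auto
    show "(case (case p of (u, v) \<Rightarrow> (u * ?s, ?s * v)) of (u, v) \<Rightarrow> (u * ?s, ?s * v)) = p"
      using p by (simp add: mult.assoc flip: mult.assoc[of "?s"])
    show "(case p of (u, v) \<Rightarrow> (u * ?s, ?s * v)) \<in> {p \<in> red w. ?DA p}"
      using phiB[OF p(2,3)] p(1) by simp
  qed
  finally show ?thesis by (simp add: sum_negf)
qed

lemma ct_pow: "Poly_Mapping.lookup ((x::qpoly) ^ k) 0 = Poly_Mapping.lookup x 0 ^ k"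
  by (induct k) (simp_all add: ct_mult)

lemma red_one: "red 1 = {(1, 1)}"
proof (intro equalityI subsetI)
  fix p assume "p \<in> red 1"
  then obtain u v where "p = (u, v)" "1 = u * v" "len u + len v = 0" by (cases p) (auto simp: red_def)
  then show "p \<in> {(1, 1)}" using len_eq0_iff by auto
qed (simp add: red_def)

lemma Phi_one: "Phi 1 = 1"
  by (simp add: Phi_def red_one Sch_one)

lemma Phi_ne: assumes "w \<noteq> 1" shows "Phi w = 0"
proof -
  have "swap_vars i (Phi w) = Phi w" for i using dd_Phi[of i w] dd_eq0_iff by blast
  then have c: "Phi w = Poly_Mapping.single 0 (Poly_Mapping.lookup (Phi w) 0)" by (rule sym_const)
  have "Poly_Mapping.lookup (Phi w) 0 =
      (\<Sum>p\<in>red w. Poly_Mapping.lookup ((-1) ^ len (snd p) * Sch (inverse (snd p)) * Sch (fst p)) 0)"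
    unfolding Phi_def lookup_sum by (simp add: case_prod_beta)
  also have "... = 0"
  proof (rule sum.neutral, rule ballI)
    fix p assume p: "p \<in> red w"
    obtain u v where uv: "p = (u, v)" by (cases p)
    have "w = u * v" using p uv by (simp add: red_def)
    moreover have "inverse v = 1 \<Longrightarrow> v = 1" by (metis perm.inverse_inverse perm.inverse_neutral)
    ultimately have "u \<noteq> 1 \<or> inverse v \<noteq> 1" using assms by auto
    then have "Poly_Mapping.lookup (Sch u) 0 = 0 \<or> Poly_Mapping.lookup (Sch (inverse v)) 0 = 0"
      using ct_Sch by blast
    then show "Poly_Mapping.lookup ((-1) ^ len (snd p) * Sch (inverse (snd p)) * Sch (fst p)) 0 = 0"
      using uv by (auto simp: ct_mult)
  qed
  finally show ?thesis using c by simp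
qed

lemma Phi_val: "Phi w = (if w = 1 then 1 else 0)"
  using Phi_one Phi_ne by simp

theorem lemma3:
  fixes S :: "nat perm \<Rightarrow> qpoly"
  assumes "\<forall>w. (\<Sum>(u, v) \<in> {(u, v). w = u * v \<and> len w = len u + len v}.
               (-1) ^ len v * S (inverse v) * schubert u) = (if w = 1 then 1 else 0)"
  shows "\<forall>w. S w = schubert w"
proof
  fix w
  have hyp: "(\<Sum>(u, v)\<in>red x. (-1) ^ len v * S (inverse v) * Sch u) = (if x = 1 then 1 else 0)" for x
    using assms unfolding red_def schubert_eq by blast
  show "S w = schubert w"
    unfolding schubert_eq
  proof (induct "len w" arbitrary: w rule: less_induct)
    case less
    define w' where "w' = inverse w"
    have lw': "len w' = len w" unfolding w'_def by (rule len_inverse)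
    let ?t = "\<lambda>(u, v). (-1) ^ len v * (S (inverse v) - Sch (inverse v)) * Sch u"
    have "(\<Sum>p\<in>red w'. ?t p) =
        (\<Sum>(u, v)\<in>red w'. (-1) ^ len v * S (inverse v) * Sch u) - (\<Sum>(u, v)\<in>red w'. (-1) ^ len v * Sch (inverse v) * Sch u)"
      by (simp add: sum_subtractf[symmetric] case_prod_beta algebra_simps)
    also have "... = 0" using hyp[of w'] Phi_val[of w'] by (simp add: Phi_def)
    finally have z: "(\<Sum>p\<in>red w'. ?t p) = 0" .
    have mem: "(1, w') \<in> red w'" by (simp add: red_def)
    have rest: "(\<Sum>p\<in>red w' - {(1, w')}. ?t p) = 0"
    proof (rule sum.neutral, rule ballI)
      fix p assume p: "p \<in> red w' - {(1, w')}"
      obtain u v where uv: "p = (u, v)" by (cases p)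
      have r: "w' = u * v" "len w' = len u + len v" using p uv by (auto simp: red_def)
      have "u \<noteq> 1" using p uv r by auto
      then have "len v < len w" using r lw' len_eq0_iff by fastforce
      then have "S (inverse v) = Sch (inverse v)" using less len_inverse by metis
      then show "?t p = 0" using uv by simp
    qed
    have "(\<Sum>p\<in>red w'. ?t p) = ?t (1, w') + (\<Sum>p\<in>red w' - {(1, w')}. ?t p)"
      using finite_red mem by (rule sum.remove)
    then have "?t (1, w') = 0" using z rest by simp
    then have "(-1) ^ len w' * (S w - Sch w) = 0" by (simp add: w'_def Sch_one)
    then show "S w = Sch w" by simp
  qed
qed

end
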